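(* Let $C$ be a binary linear self-dual code of length $n$ with exact weight enumerator $W$ and derivatives $W_{<t>}$. Then for every integer $t$ with $0\le t\le n-1$ and every $v\in F^{n-t-1}$, $$W_{<t>}[(1)\overline{v}]=(-1)^{wt(v)}\rho^{t}\,\Phi\big(W_{<t>}[(0)v]\big),$$ where $\overline{v}$ is the complement of $v$ (all coordinates flipped), $(0)v$ and $(1)\overline v$ denote prepending $0$, respectively $1$, and $\Phi$ is the nontrivial automorphism of $\mathbb{Q}(\sqrt2)$.
   Context: $F=\{0,1\}$ is the binary field. A binary linear self-dual code $C$ of length $n$ is a linear subspace of $F^n$ of dimension $n/2$ equal to its orthogonal complement under the standard dot product. The exact weight enumerator of $C$ is the vector $W\in\mathbb{Q}^{2^n}$ whose entries are labeled by the vectors of $F^n$ (in lexicographic order), with $W[v]=1$ if $v\in C$ and $W[v]=0$ otherwise. Let $\rho=\sqrt2-1$ and $\mu=-\sqrt2-1$; $\mathbb{Q}(\rho)=\mathbb{Q}(\sqrt2)$ and $\Phi:\mathbb{Q}(\rho)\to\mathbb{Q}(\rho)$ is the field automorphism with $\Phi(\rho)=\mu$ (equivalently $\Phi(\sqrt2)=-\sqrt2$). For $0\le t\le n$, the $t$-th derivative of $W$ is the vector $W_{<t>}$ of length $2^{n-t}$ with entries labeled by $v\in F^{n-t}$ given by $W_{<t>}[v]=\sum_{u\in F^t}\rho^{wt(u)}W[uv]$, where $wt(u)$ is the Hamming weight of $u$ and $uv$ is the concatenation of $u$ and $v$. *)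

theory Defs
  imports Complex_Main
begin

text \<open>Binary vectors of length n are bool lists of length n (True = 1).\<close>

definition bvecs :: "nat \<Rightarrow> bool list set" where
  "bvecs n = {v. length v = n}"

definition wt :: "bool list \<Rightarrow> nat" where
  "wt v = length (filter id v)"

definition xorv :: "bool list \<Rightarrow> bool list \<Rightarrow> bool list" where
  "xorv u v = map2 (\<noteq>) u v"

definition dotp :: "bool list \<Rightarrow> bool list \<Rightarrow> bool" where
  "dotp u v = odd (length (filter id (map2 (\<and>) u v)))"

definition linear_code :: "nat \<Rightarrow> bool list set \<Rightarrow> bool" where
  "linear_code n C \<longleftrightarrow> C \<subseteq> bvecs n \<and> replicate n False \<in> C \<and>
     (\<forall>u\<in>C. \<forall>v\<in>C. xorv u v \<in> C)"

definition dual_code :: "nat \<Rightarrow> bool list set \<Rightarrow> bool list set" where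
  "dual_code n C = {v \<in> bvecs n. \<forall>c\<in>C. \<not> dotp c v}"

definition self_dual_code :: "nat \<Rightarrow> bool list set \<Rightarrow> bool" where
  "self_dual_code n C \<longleftrightarrow> linear_code n C \<and> even n \<and> card C = 2 ^ (n div 2) \<and>
     C = dual_code n C"

definition rho :: real where "rho = sqrt 2 - 1"

text \<open>Field automorphism of Q(sqrt 2) with sqrt 2 \<mapsto> - sqrt 2 (elements represented as reals).\<close>
definition Phi :: "real \<Rightarrow> real" where
  "Phi x = (THE y. \<exists>a b :: rat. x = of_rat a + of_rat b * sqrt 2 \<and> y = of_rat a - of_rat b * sqrt 2)"

definition W :: "bool list set \<Rightarrow> bool list \<Rightarrow> real" where
  "W C v = (if v \<in> C then 1 else 0)"

text \<open>t-th derivative: entries labelled by v of length n - t.\<close>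
definition Wder :: "bool list set \<Rightarrow> nat \<Rightarrow> bool list \<Rightarrow> real" where
  "Wder C t v = (\<Sum>u\<in>bvecs t. rho ^ wt u * W C (u @ v))"

end

theory Submission
  imports Defs
begin

lemma sqrt2_irrat: "sqrt 2 \<notin> \<rat>"
proof
  assume "sqrt 2 \<in> \<rat>"
  moreover have "\<bar>sqrt 2\<bar> = sqrt 2" by simp
  ultimately obtain m n :: nat where n: "n \<noteq> 0" and e: "sqrt 2 = real m / real n"
     and cp: "coprime m n"
    by (metis Rats_abs_nat_div_natE)
  have "(real m / real n)^2 = 2" using e by (metis real_sqrt_pow2 zero_le_numeral)
  hence "real m ^2 = 2 * real n ^2" using n by (simp add: field_simps power_divide)
  hence mn: "m^2 = 2 * n^2" by (metis of_nat_eq_iff of_nat_mult of_nat_numeral of_nat_power)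
  hence "even (m^2)" by simp
  hence "even m" by simp
  then obtain a where a: "m = 2*a" by blast
  with mn have "n^2 = 2*a^2" by (simp add: power_mult_distrib)
  hence "even (n^2)" by simp
  hence "even n" by simp
  with \<open>even m\<close> cp show False by fastforce
qed

lemma rep_unique:
  assumes "of_rat a + of_rat b * sqrt 2 = of_rat a' + of_rat b' * sqrt 2"
  shows "a = a' \<and> b = b'"
proof (cases "b = b'")
  case True with assms show ?thesis by simp
next
  case False
  hence "sqrt 2 = of_rat ((a - a') / (b' - b))" using assms
    by (simp add: of_rat_divide of_rat_diff field_simps)
  hence "sqrt 2 \<in> \<rat>" by (metis Rats_of_rat)
  with sqrt2_irrat show ?thesis by blast
qed

lemma Phi_eq: "Phi (of_rat a + of_rat b * sqrt 2) = of_rat a - of_rat b * sqrt 2"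
  unfolding Phi_def
  apply (rule the_equality)
   apply blast
  using rep_unique by blast

fun rr :: "nat \<Rightarrow> rat \<times> rat" where
  "rr 0 = (1, 0)"
| "rr (Suc k) = (2 * snd (rr k) - fst (rr k), fst (rr k) - snd (rr k))"

lemma rho_pow: "rho ^ k = of_rat (fst (rr k)) + of_rat (snd (rr k)) * sqrt 2"
proof (induction k)
  case 0 show ?case by simp
next
  case (Suc k)
  have s: "sqrt 2 * sqrt 2 = (2::real)" by simp
  show ?case using Suc
    by (simp add: rho_def of_rat_diff of_rat_mult algebra_simps s)
qed

lemma mu_pow: "(- sqrt 2 - 1) ^ k = of_rat (fst (rr k)) - of_rat (snd (rr k)) * sqrt 2"
proof (induction k)
  case 0 show ?case by simp
next
  case (Suc k)
  have s: "sqrt 2 * sqrt 2 = (2::real)" by simp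
  show ?case
    by (simp only: power_Suc Suc.IH) (simp add: of_rat_diff of_rat_mult algebra_simps s)
qed

lemma Phi_sum:
  assumes "finite A"
  shows "Phi (\<Sum>u\<in>A. rho ^ k u * W C (x u)) = (\<Sum>u\<in>A. (- sqrt 2 - 1) ^ k u * W C (x u))"
proof -
  define F where "F u = (if x u \<in> C then fst (rr (k u)) else 0)" for u
  define G where "G u = (if x u \<in> C then snd (rr (k u)) else 0)" for u
  have 1: "(\<Sum>u\<in>A. rho ^ k u * W C (x u)) = of_rat (sum F A) + of_rat (sum G A) * sqrt 2"
    unfolding of_rat_sum sum_distrib_right sum.distrib[symmetric]
    by (rule sum.cong) (auto simp: F_def G_def W_def rho_pow)
  have 2: "(\<Sum>u\<in>A. (- sqrt 2 - 1) ^ k u * W C (x u)) = of_rat (sum F A) - of_rat (sum G A) * sqrt 2"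
    unfolding of_rat_sum sum_distrib_right sum_subtractf[symmetric]
    by (rule sum.cong) (auto simp: F_def G_def W_def mu_pow)
  show ?thesis unfolding 1 2 Phi_eq ..
qed

lemma wt_append[simp]: "wt (u @ v) = wt u + wt v" by (simp add: wt_def)
lemma wt_Cons[simp]: "wt (b # v) = (if b then Suc (wt v) else wt v)" by (simp add: wt_def)
lemma wt_Not: "wt (map Not u) = length u - wt u"
  by (induction u) (auto simp: wt_def Suc_diff_le)
lemma wt_le: "wt u \<le> length u" by (simp add: wt_def)

lemma finite_bvecs: "finite (bvecs t)"
proof -
  have "bvecs t = {xs. set xs \<subseteq> UNIV \<and> length xs = t}" by (auto simp: bvecs_def)
  thus ?thesis using finite_lists_length_eq[of "UNIV :: bool set" t] by simp
qed

lemma sd_even: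
  assumes "self_dual_code n C" "c \<in> C" shows "even (wt c)"
proof -
  have "c \<in> dual_code n C" using assms unfolding self_dual_code_def by blast
  hence "\<not> dotp c c" using assms(2) unfolding dual_code_def by blast
  moreover have "map2 (\<and>) c c = c" by (induction c) auto
  ultimately show ?thesis by (simp add: dotp_def wt_def)
qed

lemma sd_not:
  assumes "self_dual_code n C" "c \<in> C" shows "map Not c \<in> C"
proof -
  have lin: "linear_code n C" and CD: "C = dual_code n C" using assms unfolding self_dual_code_def by auto
  have len: "\<And>x. x \<in> C \<Longrightarrow> length x = n" using lin unfolding linear_code_def bvecs_def by auto
  have "replicate n True \<in> dual_code n C"
    unfolding dual_code_def bvecs_def
  proof (safe)
    fix x assume x: "x \<in> C" "dotp x (replicate n True)"
    have "map2 (\<and>) x (replicate n True) = x" using len[OF x(1)]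
      by (induction x arbitrary: n) (auto simp: Suc_length_conv)
    with x(2) sd_even[OF assms(1) x(1)] show False by (simp add: dotp_def wt_def)
  qed simp
  hence o: "replicate n True \<in> C" using CD by simp
  have "xorv (replicate n True) c \<in> C" using lin o assms(2) unfolding linear_code_def by blast
  moreover have "xorv (replicate n True) c = map Not c" using len[OF assms(2)]
    unfolding xorv_def by (induction c arbitrary: n) (auto simp: Suc_length_conv)
  ultimately show ?thesis by simp
qed

lemma W_not: assumes "self_dual_code n C" shows "W C (map Not y) = W C y"
  using sd_not[OF assms, of y] sd_not[OF assms, of "map Not y"]
  by (auto simp: W_def comp_def)

theorem mainTheorem3:
  fixes n :: nat and C :: "bool list set"
  assumes "self_dual_code n C"
  shows "\<forall>t. t < n \<longrightarrow> (\<forall>v\<in>bvecs (n - t - 1).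
           Wder C t (True # map Not v) = (-1) ^ wt v * rho ^ t * Phi (Wder C t (False # v)))"
proof (intro allI impI ballI)
  fix t v assume "t < n" "v \<in> bvecs (n - t - 1)"
  define mu :: real where "mu = - sqrt 2 - 1"
  have "Wder C t (True # map Not v) = (\<Sum>u\<in>bvecs t. rho ^ wt u * W C (map Not u @ False # v))"
    unfolding Wder_def
  proof (rule sum.cong[OF refl])
    fix u
    have "u @ True # map Not v = map Not (map Not u @ False # v)" by (simp add: comp_def)
    thus "rho ^ wt u * W C (u @ True # map Not v) = rho ^ wt u * W C (map Not u @ False # v)"
      using W_not[OF assms] by metis
  qed
  also have "\<dots> = (\<Sum>u\<in>bvecs t. rho ^ (t - wt u) * W C (u @ False # v))"
    apply (rule sum.reindex_bij_witness[of _ "map Not" "map Not"])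
    by (auto simp: bvecs_def comp_def wt_Not wt_le diff_diff_cancel)
  also have "\<dots> = (\<Sum>u\<in>bvecs t. (-1) ^ wt v * rho ^ t * (mu ^ wt u * W C (u @ False # v)))"
  proof (rule sum.cong[OF refl])
    fix u assume u: "u \<in> bvecs t"
    show "rho ^ (t - wt u) * W C (u @ False # v) = (-1) ^ wt v * rho ^ t * (mu ^ wt u * W C (u @ False # v))"
    proof (cases "u @ False # v \<in> C")
      case False thus ?thesis by (simp add: W_def)
    next
      case True
      hence ev: "even (wt u + wt v)" using sd_even[OF assms] by fastforce
      hence sg: "(-1::real) ^ wt v = (-1) ^ wt u"
        by (metis even_add neg_one_even_power neg_one_odd_power)
      have le: "wt u \<le> t" using u wt_le[of u] by (simp add: bvecs_def)
      have rm: "rho * (- mu) = 1" unfolding rho_def mu_def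
        by (simp add: algebra_simps)
      have "rho ^ t = rho ^ (t - wt u) * rho ^ wt u" using le
        by (metis le_add_diff_inverse2 power_add)
      hence rt: "rho ^ t = rho ^ (t - wt u) * rho ^ wt u" .
      have "rho ^ (t - wt u) = rho ^ (t - wt u) * (rho * (- mu)) ^ wt u" by (simp only: rm power_one mult_1_right)
      also have "\<dots> = rho ^ (t - wt u) * (rho ^ wt u * ((-1) ^ wt u * mu ^ wt u))"
        by (subst power_mult_distrib, subst power_minus, rule refl)
      also have "\<dots> = (-1) ^ wt u * rho ^ t * mu ^ wt u" unfolding rt by (simp only: mult_ac)
      finally have key: "rho ^ (t - wt u) = (-1) ^ wt u * rho ^ t * mu ^ wt u" .
      show ?thesis using True by (simp add: W_def key sg)
    qed
  qed
  also have "\<dots> = (-1) ^ wt v * rho ^ t * (\<Sum>u\<in>bvecs t. mu ^ wt u * W C (u @ False # v))"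
    by (simp add: sum_distrib_left)
  also have "\<dots> = (-1) ^ wt v * rho ^ t * Phi (Wder C t (False # v))"
    unfolding Wder_def mu_def using Phi_sum[OF finite_bvecs] by simp
  finally show "Wder C t (True # map Not v) = (-1) ^ wt v * rho ^ t * Phi (Wder C t (False # v))" .
qed

end
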